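(* Let $m,q\in\mathbb{Q}\setminus\{0\}$ with $q\neq -1/m$. Then the torsion subgroup of $E_{m,q}(\mathbb{Q})$ contains a subgroup isomorphic to $\mathbb{Z}/2\mathbb{Z}$; explicitly $\bigl(\tfrac13((m^2+1)q^2+2mq+2),0\bigr)\in E_{m,q}(\mathbb{Q})$. Moreover, for every fixed $m\in\mathbb{Q}\setminus\{0\}$ there exist infinitely many $q\in\mathbb{Q}$ (with $q\neq0$, $q\neq-1/m$) such that the torsion subgroup of $E_{m,q}(\mathbb{Q})$ contains a subgroup isomorphic to $\mathbb{Z}/2\mathbb{Z}\times\mathbb{Z}/2\mathbb{Z}$.
   Context: For $m,q$ (rational numbers or indeterminates), $E_{m,q}$ denotes the curve given by the Weierstrass equation $$y^2=x^3-\tfrac13\bigl[(m^2+1)^2q^4+4m(m^2+1)q^3+(5m^2+4)q^2+2mq+1\bigr]x+\tfrac1{27}\bigl[2(m^2+1)^2q^4+8m(m^2+1)q^3+(7m^2+8)q^2-2mq-1\bigr]\bigl[(m^2+1)q^2+2mq+2\bigr].$$ For $m,q\in\mathbb{Q}^\times$ with $q\ne-1/m$ it is an elliptic curve. *)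

theory Defs
  imports Complex_Main
begin

text \<open>Points of a short Weierstrass curve y^2 = x^3 + a x + b over Q:
  None is the point at infinity O, Some (x,y) an affine point.\<close>

type_synonym ec_point = "(rat \<times> rat) option"

definition on_curve :: "rat \<Rightarrow> rat \<Rightarrow> ec_point \<Rightarrow> bool" where
  "on_curve a b P = (case P of None \<Rightarrow> True
     | Some (x, y) \<Rightarrow> y^2 = x^3 + a * x + b)"

text \<open>The chord-and-tangent group law (depends only on the coefficient a).\<close>
definition ec_add :: "rat \<Rightarrow> ec_point \<Rightarrow> ec_point \<Rightarrow> ec_point" where
  "ec_add a P Q = (case P of None \<Rightarrow> Q | Some (x1, y1) \<Rightarrow>
     (case Q of None \<Rightarrow> P | Some (x2, y2) \<Rightarrow>
       (if x1 = x2 \<and> y1 = - y2 then None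
        else let l = (if x1 = x2 then (3 * x1^2 + a) / (2 * y1)
                      else (y2 - y1) / (x2 - x1));
                 x3 = l^2 - x1 - x2
             in Some (x3, l * (x1 - x3) - y1))))"

definition coeffA :: "rat \<Rightarrow> rat \<Rightarrow> rat" where
  "coeffA m q = - (1/3) * ((m^2+1)^2*q^4 + 4*m*(m^2+1)*q^3 + (5*m^2+4)*q^2 + 2*m*q + 1)"

definition coeffB :: "rat \<Rightarrow> rat \<Rightarrow> rat" where
  "coeffB m q = (1/27) * (2*(m^2+1)^2*q^4 + 8*m*(m^2+1)*q^3 + (7*m^2+8)*q^2 - 2*m*q - 1)
                       * ((m^2+1)*q^2 + 2*m*q + 2)"

definition Emq_point :: "rat \<Rightarrow> rat \<Rightarrow> ec_point \<Rightarrow> bool" where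
  "Emq_point m q P = on_curve (coeffA m q) (coeffB m q) P"

definition Emq_add :: "rat \<Rightarrow> rat \<Rightarrow> ec_point \<Rightarrow> ec_point \<Rightarrow> ec_point" where
  "Emq_add m q = ec_add (coeffA m q)"

definition order2 :: "rat \<Rightarrow> rat \<Rightarrow> ec_point \<Rightarrow> bool" where
  "order2 m q P = (Emq_point m q P \<and> P \<noteq> None \<and> Emq_add m q P P = None)"

end

theory Submission
  imports Defs
begin

lemma order2_root:
  assumes "x^3 + coeffA m q * x + coeffB m q = 0"
  shows "order2 m q (Some (x, 0))"
  using assms unfolding order2_def Emq_point_def on_curve_def Emq_add_def ec_add_def
  by (simp add: algebra_simps)

lemma root_x0:
  fixes m q :: rat
  defines "x0 \<equiv> (1/3) * ((m^2+1)*q^2 + 2*m*q + 2)"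
  shows "x0^3 + coeffA m q * x0 + coeffB m q = 0"
  unfolding x0_def coeffA_def coeffB_def by (simp add: field_simps power2_eq_square power3_eq_cube power4_eq_xxxx)

lemma root_other:
  fixes m q W :: rat
  defines "s \<equiv> (m^2+1)*q^2 + 2*m*q"
  assumes W: "W^2 = s^2 + 4*q^2"
  defines "r \<equiv> (-(s+2) + 3*W)/6"
  shows "r^3 + coeffA m q * r + coeffB m q = 0"
proof -
  have A: "coeffA m q = -(1/3) * (s^2 + s + 3*q^2 + 1)"
    unfolding coeffA_def s_def by (simp add: algebra_simps power2_eq_square power3_eq_cube power4_eq_xxxx)
  have B: "coeffB m q = (1/27) * (2*s^2 - s + 9*q^2 - 1) * (s+2)"
    unfolding coeffB_def s_def by (simp add: algebra_simps power2_eq_square power3_eq_cube power4_eq_xxxx)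
  have q2: "q^2 = (W^2 - s^2)/4" using W by simp
  have "r^3 + coeffA m q * r + coeffB m q = 0"
    unfolding A B r_def q2 by (simp add: field_simps power2_eq_square power3_eq_cube)
  then show ?thesis .
qed

lemma part2:
  fixes m :: rat
  assumes m: "m \<noteq> 0"
  shows "infinite {q :: rat. q \<noteq> 0 \<and> q \<noteq> -1/m \<and>
              (\<exists>P Q. order2 m q P \<and> order2 m q Q \<and> P \<noteq> Q)}"
proof -
  define g where "g = (\<lambda>n::nat. (of_nat n - 1/of_nat n - 2*m)/(m^2+1) :: rat)"
  have pos: "m^2 + 1 > (0::rat)" by (metis add_pos_nonneg zero_le_power2 zero_less_one add.commute)
  have inj: "inj_on g {1..}"
  proof (rule inj_onI)
    fix a b assume a: "a \<in> {1::nat..}" and b: "b \<in> {1::nat..}" and e: "g a = g b"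
    have "of_nat a - 1/of_nat a = (of_nat b - 1/of_nat b :: rat)"
      using e pos unfolding g_def by (simp add: divide_cancel_right)
    moreover have "(of_nat a - of_nat b :: rat) * (1 + 1/(of_nat a * of_nat b)) =
        (of_nat a - 1/of_nat a) - (of_nat b - 1/of_nat b)"
      using a b by (simp add: field_simps)
    ultimately have "(of_nat a - of_nat b :: rat) * (1 + 1/(of_nat a * of_nat b)) = 0"
      by simp
    moreover have "1 + 1/(of_nat a * of_nat b) > (0::rat)"
      using a b by (simp add: add_pos_nonneg)
    ultimately show "a = b" by simp
  qed
  have inf: "infinite (g ` {1..})"
    using inj finite_imageD infinite_Ici by blast
  have sub: "g ` {1..} - {0, -1/m} \<subseteq> {q :: rat. q \<noteq> 0 \<and> q \<noteq> -1/m \<and>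
              (\<exists>P Q. order2 m q P \<and> order2 m q Q \<and> P \<noteq> Q)}"
  proof
    fix q assume "q \<in> g ` {1..} - {0, -1/m}"
    then obtain n :: nat where n: "n \<ge> 1" and qg: "q = g n" and q0: "q \<noteq> 0" and q1: "q \<noteq> -1/m"
      by auto
    define t where "t = (of_nat n :: rat) - 1/of_nat n"
    have t: "(m^2+1)*q + 2*m = t" using qg pos unfolding g_def t_def by simp
    define W where "W = q * (of_nat n + 1/of_nat n)"
    define s where "s = (m^2+1)*q^2 + 2*m*q"
    have st: "s = q*t" unfolding s_def t[symmetric] by (simp add: algebra_simps power2_eq_square)
    have "(of_nat n + 1/of_nat n)^2 = t^2 + (4::rat)"
      using n unfolding t_def by (simp add: field_simps power2_eq_square)
    hence "W^2 = q^2 * (t^2 + 4)" unfolding W_def by (simp add: power_mult_distrib)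
    hence W2: "W^2 = s^2 + 4*q^2" unfolding st by (simp add: algebra_simps power_mult_distrib)
    have W2': "(-W)^2 = s^2 + 4*q^2" using W2 by simp
    have "of_nat n + 1/of_nat n > (0::rat)" using n by (simp add: add_pos_nonneg)
    hence Wn: "W \<noteq> 0" using q0 unfolding W_def by simp
    have P: "order2 m q (Some ((-(s+2) + 3*W)/6, 0))"
      by (rule order2_root) (use root_other[OF W2[unfolded s_def]] in \<open>simp add: s_def\<close>)
    have Q: "order2 m q (Some ((-(s+2) + 3*(-W))/6, 0))"
      by (rule order2_root) (use root_other[OF W2'[unfolded s_def]] in \<open>simp add: s_def\<close>)
    have "Some ((-(s+2) + 3*W)/6, 0) \<noteq> Some ((-(s+2) + 3*(-W))/6, (0::rat))"
      using Wn by simp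
    with P Q q0 q1 show "q \<in> {q :: rat. q \<noteq> 0 \<and> q \<noteq> -1/m \<and>
              (\<exists>P Q. order2 m q P \<and> order2 m q Q \<and> P \<noteq> Q)}" by blast
  qed
  have "infinite (g ` {1..} - {0, -1/m})" using inf by simp
  thus ?thesis using sub finite_subset by blast
qed

theorem mainTheorem5:
  shows "(\<forall>m q :: rat. m \<noteq> 0 \<longrightarrow> q \<noteq> 0 \<longrightarrow> q \<noteq> -1/m \<longrightarrow>
            order2 m q (Some ((1/3) * ((m^2+1)*q^2 + 2*m*q + 2), 0)))
       \<and> (\<forall>m :: rat. m \<noteq> 0 \<longrightarrow>
            infinite {q :: rat. q \<noteq> 0 \<and> q \<noteq> -1/m \<and>
              (\<exists>P Q. order2 m q P \<and> order2 m q Q \<and> P \<noteq> Q)})"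
  using order2_root[OF root_x0] part2 by blast

end
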